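(* Let $e=(e_0,\dots,e_n)$ be a system of weights, $n\ge1$. Let $\mathbb P^{2n+1}(e,e)=\operatorname{Proj}k[T_0,\dots,T_n,T'_0,\dots,T'_n]$ with $\deg T_i=\deg T'_i=e_i$, let $L_1=V_+(T_0,\dots,T_n)$, $L_2=V_+(T'_0,\dots,T'_n)$, and $U_n(e)=\mathbb P^{2n+1}(e,e)\setminus(L_1\cup L_2)$. Then the morphism $$\pi_n(e)\colon U_n(e)\to\mathbb P^n(e)\times\mathbb P^n(e),\quad [t_0,\dots,t_n,t'_0,\dots,t'_n]\mapsto([t_0,\dots,t_n],[t'_0,\dots,t'_n])$$ is open.
   Context: A system of weights is a tuple of positive integers; the weighted projective space $\mathbb P^n(e)=\operatorname{Proj}(k[T_0,\dots,T_n])$ with $\deg T_i=e_i$, over an algebraically closed field $k$; its points are classes $[a_0,\dots,a_n]\neq0$ with $[a_i]\sim[t^{e_i}a_i]$, $t\in k^*$. *)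

theory Defs
  imports "HOL-Computational_Algebra.Polynomial" "HOL-Library.Poly_Mapping"
begin

text \<open>Multivariate polynomials over a field: finitely supported maps from
monomials (exponent vectors, variables indexed by nat) to coefficients.\<close>

type_synonym 'a mpoly = "(nat \<Rightarrow>\<^sub>0 nat) \<Rightarrow>\<^sub>0 'a"

definition vars_in :: "nat \<Rightarrow> 'a::zero mpoly \<Rightarrow> bool" where
  "vars_in m p \<longleftrightarrow> (\<forall>a\<in>Poly_Mapping.keys p. Poly_Mapping.keys a \<subseteq> {..<m})"

definition whom :: "(nat \<Rightarrow> nat) \<Rightarrow> nat \<Rightarrow> 'a::zero mpoly \<Rightarrow> bool" where
  "whom w d p \<longleftrightarrow> (\<forall>a\<in>Poly_Mapping.keys p. (\<Sum>i\<in>Poly_Mapping.keys a. w i * Poly_Mapping.lookup a i) = d)"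

definition peval :: "'a::comm_semiring_1 mpoly \<Rightarrow> (nat \<Rightarrow> 'a) \<Rightarrow> 'a" where
  "peval p x = (\<Sum>a\<in>Poly_Mapping.keys p. Poly_Mapping.lookup p a * (\<Prod>i\<in>Poly_Mapping.keys a. x i ^ Poly_Mapping.lookup a i))"

definition affpts :: "nat \<Rightarrow> (nat \<Rightarrow> 'a::zero) set" where
  "affpts m = {x. \<forall>i\<ge>m. x i = 0}"

definition orbit :: "(nat \<Rightarrow> nat) \<Rightarrow> (nat \<Rightarrow> 'a::field) \<Rightarrow> (nat \<Rightarrow> 'a) set" where
  "orbit w x = {(\<lambda>i. t ^ w i * x i) | t. t \<noteq> 0}"

definition WP :: "(nat \<Rightarrow> nat) \<Rightarrow> nat \<Rightarrow> (nat \<Rightarrow> 'a::field) set set" where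
  "WP w m = {orbit w x | x. x \<in> affpts m \<and> x \<noteq> (\<lambda>_. 0)}"

definition wp_closed :: "(nat \<Rightarrow> nat) \<Rightarrow> nat \<Rightarrow> (nat \<Rightarrow> 'a::field) set set \<Rightarrow> bool" where
  "wp_closed w m Z \<longleftrightarrow> (\<exists>F::'a mpoly set. (\<forall>f\<in>F. vars_in m f \<and> (\<exists>d. whom w d f)) \<and>
      Z = {P \<in> WP w m. \<forall>x\<in>P. \<forall>f\<in>F. peval f x = 0})"

definition wp_open :: "(nat \<Rightarrow> nat) \<Rightarrow> nat \<Rightarrow> (nat \<Rightarrow> 'a::field) set set \<Rightarrow> bool" where
  "wp_open w m U \<longleftrightarrow> U \<subseteq> WP w m \<and> wp_closed w m (WP w m - U)"

text \<open>Weights (e,e) on variables T_0..T_n, T'_0..T'_n indexed 0..2n+1.\<close>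
definition ww :: "(nat \<Rightarrow> nat) \<Rightarrow> nat \<Rightarrow> nat \<Rightarrow> nat" where
  "ww e n i = (if i \<le> n then e i else e (i - Suc n))"

definition first_part :: "nat \<Rightarrow> (nat \<Rightarrow> 'a::zero) \<Rightarrow> nat \<Rightarrow> 'a" where
  "first_part n z = (\<lambda>i. if i \<le> n then z i else 0)"

definition second_part :: "nat \<Rightarrow> (nat \<Rightarrow> 'a::zero) \<Rightarrow> nat \<Rightarrow> 'a" where
  "second_part n z = (\<lambda>i. if i \<le> n then z (i + Suc n) else 0)"

definition join :: "nat \<Rightarrow> (nat \<Rightarrow> 'a) \<Rightarrow> (nat \<Rightarrow> 'a) \<Rightarrow> nat \<Rightarrow> 'a" where
  "join n x y = (\<lambda>i. if i \<le> n then x i else y (i - Suc n))"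

definition Un_e :: "(nat \<Rightarrow> nat) \<Rightarrow> nat \<Rightarrow> (nat \<Rightarrow> 'a::field) set set" where
  "Un_e e n = {P \<in> WP (ww e n) (2*n+2).
      \<forall>z\<in>P. first_part n z \<noteq> (\<lambda>_. 0) \<and> second_part n z \<noteq> (\<lambda>_. 0)}"

definition pi_e :: "(nat \<Rightarrow> nat) \<Rightarrow> nat \<Rightarrow> (nat \<Rightarrow> 'a::field) set
                    \<Rightarrow> (nat \<Rightarrow> 'a) set \<times> (nat \<Rightarrow> 'a) set" where
  "pi_e e n P = (let z = (SOME z. z \<in> P) in
       (orbit e (first_part n z), orbit e (second_part n z)))"

text \<open>Bigrading weights on k[T,T'] for the product P^n(e) x P^n(e).\<close>
definition w1 :: "(nat \<Rightarrow> nat) \<Rightarrow> nat \<Rightarrow> nat \<Rightarrow> nat" where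
  "w1 e n i = (if i \<le> n then e i else 0)"

definition w2 :: "(nat \<Rightarrow> nat) \<Rightarrow> nat \<Rightarrow> nat \<Rightarrow> nat" where
  "w2 e n i = (if i \<le> n then 0 else e (i - Suc n))"

definition prod_closed :: "(nat \<Rightarrow> nat) \<Rightarrow> nat
     \<Rightarrow> ((nat \<Rightarrow> 'a::field) set \<times> (nat \<Rightarrow> 'a) set) set \<Rightarrow> bool" where
  "prod_closed e n Z \<longleftrightarrow> (\<exists>F::'a mpoly set.
      (\<forall>f\<in>F. vars_in (2*n+2) f \<and> (\<exists>d1 d2. whom (w1 e n) d1 f \<and> whom (w2 e n) d2 f)) \<and>
      Z = {(P,Q). P \<in> WP e (Suc n) \<and> Q \<in> WP e (Suc n) \<and>
              (\<forall>x\<in>P. \<forall>y\<in>Q. \<forall>f\<in>F. peval f (join n x y) = 0)})"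

definition prod_open :: "(nat \<Rightarrow> nat) \<Rightarrow> nat
     \<Rightarrow> ((nat \<Rightarrow> 'a::field) set \<times> (nat \<Rightarrow> 'a) set) set \<Rightarrow> bool" where
  "prod_open e n V \<longleftrightarrow> V \<subseteq> WP e (Suc n) \<times> WP e (Suc n) \<and>
      prod_closed e n (WP e (Suc n) \<times> WP e (Suc n) - V)"

end

theory Submission
  imports Defs
begin

definition degw :: "(nat \<Rightarrow> nat) \<Rightarrow> (nat \<Rightarrow>\<^sub>0 nat) \<Rightarrow> nat" where
  "degw w m = (\<Sum>i\<in>Poly_Mapping.keys m. w i * Poly_Mapping.lookup m i)"

definition comp :: "(nat \<Rightarrow> nat) \<Rightarrow> 'a::zero mpoly \<Rightarrow> nat \<Rightarrow> 'a mpoly" where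
  "comp w f a = Abs_poly_mapping (\<lambda>m. if degw w m = a then Poly_Mapping.lookup f m else 0)"

lemma lookup_comp: "Poly_Mapping.lookup (comp w f a) m = (if degw w m = a then Poly_Mapping.lookup f m else 0)"
proof -
  have "{m. (if degw w m = a then Poly_Mapping.lookup f m else 0) \<noteq> 0} \<subseteq> {m. Poly_Mapping.lookup f m \<noteq> 0}"
    by auto
  then have "finite {m. (if degw w m = a then Poly_Mapping.lookup f m else 0) \<noteq> 0}"
    using finite_subset finite_lookup by blast
  then show ?thesis unfolding comp_def by simp
qed

lemma keys_comp: "Poly_Mapping.keys (comp w f a) = {m \<in> Poly_Mapping.keys f. degw w m = a}"
  by (auto simp: in_keys_iff lookup_comp split: if_splits)

definition mono :: "(nat \<Rightarrow>\<^sub>0 nat) \<Rightarrow> (nat \<Rightarrow> 'a::comm_semiring_1) \<Rightarrow> 'a" where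
  "mono m z = (\<Prod>i\<in>Poly_Mapping.keys m. z i ^ Poly_Mapping.lookup m i)"

lemma mono_scale: "mono m (\<lambda>i. s ^ w i * z i) = s ^ degw w m * mono m z"
  unfolding mono_def degw_def power_sum
  by (simp add: power_mult_distrib prod.distrib power_mult)

lemma peval_comp: "peval (comp w f a) z = (\<Sum>m\<in>{m \<in> Poly_Mapping.keys f. degw w m = a}. Poly_Mapping.lookup f m * mono m z)"
  unfolding peval_def keys_comp mono_def by (rule sum.cong) (auto simp: lookup_comp)

lemma peval_scale:
  "peval f (\<lambda>i. s ^ w i * z i) = (\<Sum>a\<in>degw w ` Poly_Mapping.keys f. s ^ a * peval (comp w f a) z)"
proof -
  have "peval f (\<lambda>i. s ^ w i * z i) = (\<Sum>m\<in>Poly_Mapping.keys f. s ^ degw w m * (Poly_Mapping.lookup f m * mono m z))"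
    unfolding peval_def by (rule sum.cong) (auto simp: mono_scale[unfolded mono_def] mono_def mult.left_commute)
  also have "\<dots> = (\<Sum>a\<in>degw w ` Poly_Mapping.keys f. \<Sum>m\<in>{m \<in> Poly_Mapping.keys f. degw w m = a}. s ^ degw w m * (Poly_Mapping.lookup f m * mono m z))"
    by (rule sum.image_gen) simp
  also have "\<dots> = (\<Sum>a\<in>degw w ` Poly_Mapping.keys f. s ^ a * peval (comp w f a) z)"
    unfolding peval_comp sum_distrib_left by (rule sum.cong) auto
  finally show ?thesis .
qed

lemma peval_split:
  "peval f z = (\<Sum>a\<in>degw w ` Poly_Mapping.keys f. peval (comp w f a) z)"
  using peval_scale[of f 1 w z] by simp

lemma coeffs_zero:
  assumes inf: "infinite (UNIV :: 'a::field set)" and fin: "finite A"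
    and h: "\<forall>s::'a. s \<noteq> 0 \<longrightarrow> (\<Sum>a\<in>A. s ^ a * c a) = 0" and b: "b \<in> A"
  shows "c b = 0"
proof -
  define p where "p = (\<Sum>a\<in>A. monom (c a) a)"
  have "\<forall>s. s \<noteq> 0 \<longrightarrow> poly p s = 0"
    using h unfolding p_def by (simp add: poly_sum poly_monom mult.commute)
  then have "UNIV - {0} \<subseteq> {x. poly p x = 0}" by auto
  moreover have "infinite (UNIV - {0::'a})" using inf by simp
  ultimately have "infinite {x. poly p x = 0}" using finite_subset by blast
  then have "p = 0" using poly_roots_finite by blast
  then have "coeff p b = 0" by simp
  moreover have "coeff p b = c b"
    unfolding p_def coeff_sum coeff_monom using fin b by (simp add: sum.delta)
  ultimately show ?thesis by simp
qed

lemma alg_closed_infinite: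
  assumes alg_closed: "\<forall>p :: 'a::field poly. degree p > 0 \<longrightarrow> (\<exists>x. poly p x = 0)"
  shows "infinite (UNIV :: 'a set)"
proof
  assume fin: "finite (UNIV :: 'a set)"
  define q :: "'a poly" where "q = (\<Prod>a\<in>UNIV. [:-a, 1:])"
  have dq: "degree q = card (UNIV :: 'a set)"
    unfolding q_def by (subst degree_prod_eq_sum_degree) auto
  have "card (UNIV :: 'a set) > 0" using fin by (simp add: card_gt_0_iff)
  then have "degree (q + 1) = degree q" using dq by (subst degree_add_eq_left) auto
  then have "degree (q + 1) > 0" using dq \<open>card (UNIV :: 'a set) > 0\<close> by simp
  then obtain x where "poly (q + 1) x = 0" using alg_closed by blast
  moreover have "poly q x = 0" unfolding q_def poly_prod using fin
    by (simp add: prod_zero_iff)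
  ultimately show False by simp
qed


lemma orbit_scale: "(t::'a::field) \<noteq> 0 \<Longrightarrow> (\<lambda>i. t ^ w i * x i) \<in> orbit w x"
  unfolding orbit_def by blast

lemma orbit_self: "x \<in> orbit w (x :: nat \<Rightarrow> 'a::field)"
  using orbit_scale[of "1::'a" w x] by simp

lemma orbit_eq:
  assumes "y \<in> orbit w x" shows "orbit w y = orbit w (x :: nat \<Rightarrow> 'a::field)"
proof -
  obtain t where t: "t \<noteq> 0" "y = (\<lambda>i. t ^ w i * x i)" using assms unfolding orbit_def by blast
  show ?thesis
  proof
    show "orbit w y \<subseteq> orbit w x"
    proof
      fix u assume "u \<in> orbit w y"
      then obtain s where s: "s \<noteq> 0" "u = (\<lambda>i. s ^ w i * y i)" unfolding orbit_def by blast
      have "u = (\<lambda>i. (s*t) ^ w i * x i)" using s t by (simp add: power_mult_distrib mult.assoc)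
      then show "u \<in> orbit w x" using s t orbit_scale[of "s*t" w x] by simp
    qed
  next
    show "orbit w x \<subseteq> orbit w y"
    proof
      fix u assume "u \<in> orbit w x"
      then obtain s where s: "s \<noteq> 0" "u = (\<lambda>i. s ^ w i * x i)" unfolding orbit_def by blast
      have "u = (\<lambda>i. (s/t) ^ w i * y i)" using s t
        by (auto simp: power_divide field_simps)
      then show "u \<in> orbit w y" using s t orbit_scale[of "s/t" w y] by simp
    qed
  qed
qed

lemma orbit_affpts: "y \<in> orbit w x \<Longrightarrow> x \<in> affpts m \<Longrightarrow> y \<in> affpts m"
  unfolding orbit_def affpts_def by auto

lemma orbit_nz: "y \<in> orbit w x \<Longrightarrow> x \<noteq> (\<lambda>_. 0) \<Longrightarrow> y \<noteq> (\<lambda>_. (0::'a::field))"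
  unfolding orbit_def by (auto simp: fun_eq_iff)

lemma WP_member: "P \<in> WP w m \<Longrightarrow> y \<in> P \<Longrightarrow> P = orbit w y \<and> y \<in> affpts m \<and> y \<noteq> (\<lambda>_. 0)"
  unfolding WP_def using orbit_eq orbit_affpts orbit_nz by blast

lemma WP_nonempty: "P \<in> WP w m \<Longrightarrow> \<exists>y. y \<in> P"
  unfolding WP_def using orbit_self by blast

lemma join_first_second: "z \<in> affpts (2*n+2) \<Longrightarrow> join n (first_part n z) (second_part n z) = z"
  unfolding join_def first_part_def second_part_def affpts_def by (auto simp: fun_eq_iff)

lemma scale_join: "(\<lambda>i. (t::'a::comm_semiring_1) ^ (ww e n i) * join n x y i) = join n (\<lambda>i. t ^ e i * x i) (\<lambda>i. t ^ e i * y i)"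
  unfolding join_def ww_def by (auto simp: fun_eq_iff)

lemma scale_join1: "(\<lambda>i. (t::'a::comm_semiring_1) ^ (w1 e n i) * join n x y i) = join n (\<lambda>i. t ^ e i * x i) y"
  unfolding join_def w1_def by (auto simp: fun_eq_iff)

lemma first_join: "x \<in> affpts (Suc n) \<Longrightarrow> first_part n (join n x y) = x"
  unfolding join_def first_part_def affpts_def by (auto simp: fun_eq_iff)

lemma second_join: "y \<in> affpts (Suc n) \<Longrightarrow> second_part n (join n x y) = y"
  unfolding join_def second_part_def affpts_def by (auto simp: fun_eq_iff)

lemma join_affpts: "x \<in> affpts (Suc n) \<Longrightarrow> y \<in> affpts (Suc n) \<Longrightarrow> join n x y \<in> affpts (2*n+2)"
  unfolding join_def affpts_def by auto

lemma affpts_nz: "x \<in> affpts (Suc n) \<Longrightarrow> x \<noteq> (\<lambda>_. 0) \<Longrightarrow> \<exists>i\<le>n. x i \<noteq> 0"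
proof (rule ccontr)
  assume a: "x \<in> affpts (Suc n)" "x \<noteq> (\<lambda>_. 0)" "\<not> (\<exists>i\<le>n. x i \<noteq> 0)"
  have "x i = 0" for i
  proof (cases "i \<le> n")
    case True then show ?thesis using a(3) by blast
  next
    case False then have "i \<ge> Suc n" by simp
    then show ?thesis using a(1) unfolding affpts_def by blast
  qed
  then show False using a(2) by (auto simp: fun_eq_iff)
qed

lemma join_nz: "x \<in> affpts (Suc n) \<Longrightarrow> x \<noteq> (\<lambda>_. 0) \<Longrightarrow> join n x y \<noteq> (\<lambda>_. 0)"
  using affpts_nz[of x n] unfolding join_def by (auto simp: fun_eq_iff)


lemma orbit_join_mem:
  assumes "z \<in> orbit (ww e n) (join n x y)"
  shows "\<exists>t::'a::field. t \<noteq> 0 \<and> z = join n (\<lambda>i. t ^ e i * x i) (\<lambda>i. t ^ e i * y i)"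
  using assms unfolding orbit_def using scale_join by blast

lemma pi_orbit:
  fixes x y :: "nat \<Rightarrow> 'a::field"
  assumes x: "x \<in> affpts (Suc n)" and y: "y \<in> affpts (Suc n)"
  shows "pi_e e n (orbit (ww e n) (join n x y)) = (orbit e x, orbit e y)"
proof -
  let ?R = "orbit (ww e n) (join n x y)"
  define z where "z = (SOME z. z \<in> ?R)"
  have "z \<in> ?R" unfolding z_def by (rule someI[of _ "join n x y"]) (rule orbit_self)
  then obtain t :: 'a where t: "t \<noteq> 0" "z = join n (\<lambda>i. t ^ e i * x i) (\<lambda>i. t ^ e i * y i)"
    using orbit_join_mem by blast
  have tx: "(\<lambda>i. t ^ e i * x i) \<in> orbit e x" and ty: "(\<lambda>i. t ^ e i * y i) \<in> orbit e y"
    using t(1) orbit_scale by auto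
  have "first_part n z = (\<lambda>i. t ^ e i * x i)"
    using t(2) first_join orbit_affpts[OF tx x] by simp
  moreover have "second_part n z = (\<lambda>i. t ^ e i * y i)"
    using t(2) second_join orbit_affpts[OF ty y] by simp
  ultimately show ?thesis
    unfolding pi_e_def Let_def z_def[symmetric] using orbit_eq[OF tx] orbit_eq[OF ty] by simp
qed

lemma orbit_join_Un:
  fixes x y :: "nat \<Rightarrow> 'a::field"
  assumes x: "x \<in> affpts (Suc n)" "x \<noteq> (\<lambda>_. 0)" and y: "y \<in> affpts (Suc n)" "y \<noteq> (\<lambda>_. 0)"
  shows "orbit (ww e n) (join n x y) \<in> Un_e e n"
proof -
  have "orbit (ww e n) (join n x y) \<in> WP (ww e n) (2*n+2)"
    unfolding WP_def using join_affpts[OF x(1) y(1)] join_nz[OF x] by blast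
  moreover have "first_part n z \<noteq> (\<lambda>_. 0) \<and> second_part n z \<noteq> (\<lambda>_. 0)"
    if zin: "z \<in> orbit (ww e n) (join n x y)" for z
  proof -
    obtain t :: 'a where t: "t \<noteq> 0" "z = join n (\<lambda>i. t ^ e i * x i) (\<lambda>i. t ^ e i * y i)"
      using orbit_join_mem[OF zin] by blast
    have tx: "(\<lambda>i. t ^ e i * x i) \<in> orbit e x" and ty: "(\<lambda>i. t ^ e i * y i) \<in> orbit e y"
      using t(1) orbit_scale by auto
    show ?thesis using t(2) first_join[OF orbit_affpts[OF tx x(1)]] second_join[OF orbit_affpts[OF ty y(1)]]
      orbit_nz[OF tx x(2)] orbit_nz[OF ty y(2)] by simp
  qed
  ultimately show ?thesis unfolding Un_e_def by blast
qed

lemma keyK: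
  fixes V :: "(nat \<Rightarrow> 'a::field) set set"
  assumes VF: "WP (ww e n) (2*n+2) - V = {P \<in> WP (ww e n) (2*n+2). \<forall>x\<in>P. \<forall>f\<in>F. peval f x = 0}"
    and P: "P \<in> WP e (Suc n)" and Q: "Q \<in> WP e (Suc n)"
  shows "(P, Q) \<in> pi_e e n ` (V \<inter> Un_e e n) \<longleftrightarrow> (\<exists>x\<in>P. \<exists>y\<in>Q. \<exists>f\<in>F. peval f (join n x y) \<noteq> 0)"
proof
  assume "(P, Q) \<in> pi_e e n ` (V \<inter> Un_e e n)"
  then obtain R where R: "R \<in> V" "R \<in> Un_e e n" "(P, Q) = pi_e e n R" by blast
  have RW: "R \<in> WP (ww e n) (2*n+2)" using R(2) unfolding Un_e_def by blast
  define z where "z = (SOME z. z \<in> R)"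
  have "z \<in> R" unfolding z_def using WP_nonempty[OF RW] by (metis someI)
  then have zR: "R = orbit (ww e n) z" "z \<in> affpts (2*n+2)" using WP_member[OF RW] by auto
  define x where "x = first_part n z"
  define y where "y = second_part n z"
  have zj: "z = join n x y" unfolding x_def y_def using join_first_second[OF zR(2)] by simp
  have PQ: "P = orbit e x" "Q = orbit e y" using R(3) unfolding pi_e_def Let_def z_def[symmetric] x_def y_def by auto
  have xa: "x \<in> affpts (Suc n)" "y \<in> affpts (Suc n)"
    unfolding x_def y_def first_part_def second_part_def affpts_def by auto
  have "R \<notin> WP (ww e n) (2*n+2) - V" using R(1) by blast
  then obtain z' f where z': "z' \<in> R" "f \<in> F" "peval f z' \<noteq> 0" using RW VF by blast
  obtain t :: 'a where t: "t \<noteq> 0" "z' = join n (\<lambda>i. t ^ e i * x i) (\<lambda>i. t ^ e i * y i)"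
    using orbit_join_mem z'(1) zR(1) zj by blast
  have "(\<lambda>i. t ^ e i * x i) \<in> P" "(\<lambda>i. t ^ e i * y i) \<in> Q"
    using PQ t(1) orbit_scale by auto
  then show "\<exists>x\<in>P. \<exists>y\<in>Q. \<exists>f\<in>F. peval f (join n x y) \<noteq> 0" using z' t(2) by blast
next
  assume "\<exists>x\<in>P. \<exists>y\<in>Q. \<exists>f\<in>F. peval f (join n x y) \<noteq> 0"
  then obtain x y f where xyf: "x \<in> P" "y \<in> Q" "f \<in> F" "peval f (join n x y) \<noteq> 0" by blast
  have xp: "P = orbit e x" "x \<in> affpts (Suc n)" "x \<noteq> (\<lambda>_. 0)" using WP_member[OF P xyf(1)] by auto
  have yp: "Q = orbit e y" "y \<in> affpts (Suc n)" "y \<noteq> (\<lambda>_. 0)" using WP_member[OF Q xyf(2)] by auto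
  let ?R = "orbit (ww e n) (join n x y)"
  have RU: "?R \<in> Un_e e n" using orbit_join_Un xp yp by blast
  then have RW: "?R \<in> WP (ww e n) (2*n+2)" unfolding Un_e_def by blast
  have "?R \<in> V"
  proof (rule ccontr)
    assume "?R \<notin> V"
    then have "?R \<in> WP (ww e n) (2*n+2) - V" using RW by blast
    then have "peval f (join n x y) = 0" using VF xyf(3) orbit_self by blast
    then show False using xyf(4) by simp
  qed
  moreover have "pi_e e n ?R = (P, Q)" using pi_orbit xp yp by simp
  ultimately show "(P, Q) \<in> pi_e e n ` (V \<inter> Un_e e n)" using RU by (metis IntI image_eqI)
qed


lemma compC:
  fixes P Q :: "(nat \<Rightarrow> 'a::field) set"
  assumes inf: "infinite (UNIV :: 'a set)" and P: "P \<in> WP e (Suc n)"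
  shows "(\<forall>x\<in>P. \<forall>y\<in>Q. peval f (join n x y) = 0) \<longleftrightarrow>
         (\<forall>x\<in>P. \<forall>y\<in>Q. \<forall>a. peval (comp (w1 e n) f a) (join n x y) = 0)"
proof
  assume h: "\<forall>x\<in>P. \<forall>y\<in>Q. peval f (join n x y) = 0"
  show "\<forall>x\<in>P. \<forall>y\<in>Q. \<forall>a. peval (comp (w1 e n) f a) (join n x y) = 0"
  proof (intro ballI allI)
    fix x y a assume x: "x \<in> P" and y: "y \<in> Q"
    have Px: "P = orbit e x" using WP_member[OF P x] by blast
    let ?A = "degw (w1 e n) ` Poly_Mapping.keys f"
    show "peval (comp (w1 e n) f a) (join n x y) = 0"
    proof (cases "a \<in> ?A")
      case True
      have "\<forall>s::'a. s \<noteq> 0 \<longrightarrow> (\<Sum>a\<in>?A. s ^ a * peval (comp (w1 e n) f a) (join n x y)) = 0"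
      proof (intro allI impI)
        fix s :: 'a assume s: "s \<noteq> 0"
        have "(\<lambda>i. s ^ e i * x i) \<in> P" using Px s orbit_scale by auto
        then have z: "peval f (join n (\<lambda>i. s ^ e i * x i) y) = 0" using h y by blast
        have eq1: "peval f (join n (\<lambda>i. s ^ e i * x i) y) = (\<Sum>a\<in>?A. s ^ a * peval (comp (w1 e n) f a) (join n x y))"
          using peval_scale[of f s "w1 e n" "join n x y"] unfolding scale_join1 .
        show "(\<Sum>a\<in>?A. s ^ a * peval (comp (w1 e n) f a) (join n x y)) = 0"
          using eq1 z by argo
      qed
      then show ?thesis by (rule coeffs_zero[OF inf finite_imageI[OF finite_keys] _ True])
    next
      case False
      then have E: "{m \<in> Poly_Mapping.keys f. degw (w1 e n) m = a} = {}" by blast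
      show ?thesis unfolding peval_comp E by (rule sum.empty)
    qed
  qed
next
  assume h: "\<forall>x\<in>P. \<forall>y\<in>Q. \<forall>a. peval (comp (w1 e n) f a) (join n x y) = 0"
  show "\<forall>x\<in>P. \<forall>y\<in>Q. peval f (join n x y) = 0"
  proof (intro ballI)
    fix x y assume x: "x \<in> P" and y: "y \<in> Q"
    have "peval f (join n x y) = (\<Sum>a\<in>degw (w1 e n) ` Poly_Mapping.keys f. peval (comp (w1 e n) f a) (join n x y))"
      by (rule peval_split)
    also have "\<dots> = 0" by (rule sum.neutral) (use h x y in blast)
    finally show "peval f (join n x y) = 0" .
  qed
qed

lemma ww_split: "ww e n i = w1 e n i + w2 e n i"
  unfolding ww_def w1_def w2_def by simp

lemma degw_split: "degw (ww e n) m = degw (w1 e n) m + degw (w2 e n) m"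
  unfolding degw_def ww_split by (simp add: sum.distrib algebra_simps)

theorem mainTheorem8:
  fixes e :: "nat \<Rightarrow> nat" and n :: nat
  assumes alg_closed: "\<forall>p :: 'a::field poly. degree p > 0 \<longrightarrow> (\<exists>x. poly p x = 0)"
    and n_ge: "n \<ge> 1"
    and weights: "\<forall>i\<le>n. e i > 0"
  shows "\<forall>V :: (nat \<Rightarrow> 'a) set set. wp_open (ww e n) (2*n+2) V \<longrightarrow>
           prod_open e n (pi_e e n ` (V \<inter> Un_e e n))"
proof (intro allI impI)
  fix V :: "(nat \<Rightarrow> 'a) set set"
  assume "wp_open (ww e n) (2*n+2) V"
  then obtain F :: "'a mpoly set" where
    Fp: "\<forall>f\<in>F. vars_in (2*n+2) f \<and> (\<exists>d. whom (ww e n) d f)" and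
    VF: "WP (ww e n) (2*n+2) - V = {P \<in> WP (ww e n) (2*n+2). \<forall>x\<in>P. \<forall>f\<in>F. peval f x = 0}"
    unfolding wp_open_def wp_closed_def by blast
  have inf: "infinite (UNIV :: 'a set)" using alg_closed_infinite[OF alg_closed] .
  define G where "G = {comp (w1 e n) f a | f a. f \<in> F}"
  have Gp: "\<forall>g\<in>G. vars_in (2*n+2) g \<and> (\<exists>d1 d2. whom (w1 e n) d1 g \<and> whom (w2 e n) d2 g)"
  proof
    fix g assume "g \<in> G"
    then obtain f a where g: "g = comp (w1 e n) f a" "f \<in> F" unfolding G_def by blast
    obtain d where d: "whom (ww e n) d f" using Fp g(2) by blast
    have v: "vars_in (2*n+2) f" using Fp g(2) by blast
    have "vars_in (2*n+2) g" using v unfolding vars_in_def g(1) keys_comp by auto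
    moreover have "whom (w1 e n) a g" unfolding whom_def g(1) keys_comp degw_def[symmetric] by auto
    moreover have "whom (w2 e n) (d - a) g"
      unfolding whom_def g(1) keys_comp degw_def[symmetric]
    proof
      fix m assume "m \<in> {m \<in> Poly_Mapping.keys f. degw (w1 e n) m = a}"
      then have "m \<in> Poly_Mapping.keys f" "degw (w1 e n) m = a" by auto
      moreover have "degw (ww e n) m = d" using d \<open>m \<in> Poly_Mapping.keys f\<close>
        unfolding whom_def degw_def by blast
      ultimately show "degw (w2 e n) m = d - a" using degw_split[of e n m] by simp
    qed
    ultimately show "vars_in (2*n+2) g \<and> (\<exists>d1 d2. whom (w1 e n) d1 g \<and> whom (w2 e n) d2 g)" by blast
  qed
  have sub: "pi_e e n ` (V \<inter> Un_e e n) \<subseteq> WP e (Suc n) \<times> WP e (Suc n)"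
  proof
    fix PQ assume "PQ \<in> pi_e e n ` (V \<inter> Un_e e n)"
    then obtain R where R: "R \<in> Un_e e n" "PQ = pi_e e n R" by blast
    have RW: "R \<in> WP (ww e n) (2*n+2)" using R(1) unfolding Un_e_def by blast
    define z where "z = (SOME z. z \<in> R)"
    have "z \<in> R" unfolding z_def using WP_nonempty[OF RW] by (metis someI)
    then have nz: "first_part n z \<noteq> (\<lambda>_. 0)" "second_part n z \<noteq> (\<lambda>_. 0)"
      using R(1) unfolding Un_e_def by auto
    have "first_part n z \<in> affpts (Suc n)" "second_part n z \<in> affpts (Suc n)"
      unfolding first_part_def second_part_def affpts_def by auto
    then show "PQ \<in> WP e (Suc n) \<times> WP e (Suc n)"
      using nz R(2) unfolding pi_e_def Let_def z_def[symmetric] WP_def by blast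
  qed
  have eq: "WP e (Suc n) \<times> WP e (Suc n) - pi_e e n ` (V \<inter> Un_e e n) =
      {(P,Q). P \<in> WP e (Suc n) \<and> Q \<in> WP e (Suc n) \<and>
              (\<forall>x\<in>P. \<forall>y\<in>Q. \<forall>g\<in>G. peval g (join n x y) = 0)}"
  proof (rule set_eqI)
    fix PQ :: "(nat \<Rightarrow> 'a) set \<times> (nat \<Rightarrow> 'a) set"
    obtain P Q where PQ: "PQ = (P, Q)" by fastforce
    have "(\<forall>x\<in>P. \<forall>y\<in>Q. \<forall>g\<in>G. peval g (join n x y) = 0) \<longleftrightarrow>
          (\<forall>f\<in>F. \<forall>x\<in>P. \<forall>y\<in>Q. \<forall>a. peval (comp (w1 e n) f a) (join n x y) = 0)"
      unfolding G_def by blast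
    moreover have "P \<in> WP e (Suc n) \<Longrightarrow>
      (\<forall>f\<in>F. \<forall>x\<in>P. \<forall>y\<in>Q. \<forall>a. peval (comp (w1 e n) f a) (join n x y) = 0) \<longleftrightarrow>
      (\<forall>f\<in>F. \<forall>x\<in>P. \<forall>y\<in>Q. peval f (join n x y) = 0)"
      using compC[OF inf] by blast
    ultimately show "PQ \<in> WP e (Suc n) \<times> WP e (Suc n) - pi_e e n ` (V \<inter> Un_e e n) \<longleftrightarrow>
      PQ \<in> {(P,Q). P \<in> WP e (Suc n) \<and> Q \<in> WP e (Suc n) \<and>
              (\<forall>x\<in>P. \<forall>y\<in>Q. \<forall>g\<in>G. peval g (join n x y) = 0)}"
      unfolding PQ using keyK[OF VF, of P Q] by auto
  qed
  show "prod_open e n (pi_e e n ` (V \<inter> Un_e e n))"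
    unfolding prod_open_def prod_closed_def using sub Gp eq by blast
qed

end
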